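(* Let $d\ge2$ and let $\mathcal{H}$ be a $d$-uniform simple hypergraph such that any two distinct edges $S,S'$ with $S\cap S'\neq\emptyset$ satisfy $|S\cap S'|=d-1$. Let $x$ be a simplicial vertex of $\mathcal{H}$, $S=\{x,x_2,\dots,x_d\}$ an edge containing $x$, and $N(S)=\{z_1,\dots,z_t\}$ with $z_1,\dots,z_t$ pairwise distinct. Let $S_1,\dots,S_t$ be distinct edges of $\mathcal{H}$ with $S_\ell\setminus S=\{z_\ell\}$ and $x\notin S_\ell$ for all $1\le\ell\le t$, and let $\mathcal{H}_2$ be the induced subhypergraph of $\mathcal{H}$ on $V(\mathcal{H})\setminus\{x,x_2,\dots,x_d,z_1,\dots,z_t\}$. If $\mathcal{S}'$ is a self disjoint set in $\mathcal{H}_2$ of type $(i-1-t,\,j-d-t)$, then $\mathcal{S}=\mathcal{S}'\cup\{S,S_1,\dots,S_t\}$ is a self disjoint set in $\mathcal{H}$ of type $(i,j)$.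
   Context: A simple hypergraph $\mathcal{H}$ is a set $\mathcal{E}(\mathcal{H})$ of subsets (edges) of a finite vertex set $V(\mathcal{H})$, each of cardinality at least $2$, none contained in another; $d$-uniform means all edges have cardinality $d$. For $W\subseteq V(\mathcal{H})$, the induced subhypergraph $\mathcal{H}_W$ has vertex set $W$ and edges the edges of $\mathcal{H}$ contained in $W$. For an edge $S$, $N(S)=\bigcup_{E\in\mathcal{E}(\mathcal{H}),\,E\cap S\neq\emptyset}(E\setminus S)$. For a vertex $x$, $N[x]=\{x\}\cup\{y:\{x,y\}\subseteq E\text{ for some edge }E\}$; $x$ is simplicial if every $d$-subset of $N[x]$ is an edge. For a family $\mathcal{S}=\{T_1,\dots,T_i\}$ of distinct edges, its type is $(i,j)$ with $j=|\bigcup_\ell T_\ell|$. $\mathcal{S}$ is an induced matching if the $T_\ell$ are pairwise disjoint and no edge outside $\mathcal{S}$ is contained in $\bigcup_\ell T_\ell$; a self disjoint set if (i) for all $k$, $T_k\nsubseteq\bigcup_{\ell\neq k}T_\ell$, and (ii) there is an induced matching $\mathcal{S}_0\subseteq\mathcal{S}$ such that for every $T_\ell\in\mathcal{S}\setminus\mathcal{S}_0$ there is $T'\in\mathcal{S}_0$ with $|T_\ell\setminus T'|=1$ (all notions relative to the ambient hypergraph, $\mathcal{H}_2$ or $\mathcal{H}$). *)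

theory Defs
  imports Main
begin

definition simple_hg :: "'a set \<Rightarrow> 'a set set \<Rightarrow> bool" where
  "simple_hg V E \<longleftrightarrow> finite V \<and> (\<forall>e\<in>E. e \<subseteq> V \<and> card e \<ge> 2)
     \<and> (\<forall>e\<in>E. \<forall>e'\<in>E. e \<subseteq> e' \<longrightarrow> e = e')"

definition uniform_hg :: "nat \<Rightarrow> 'a set set \<Rightarrow> bool" where
  "uniform_hg d E \<longleftrightarrow> (\<forall>e\<in>E. card e = d)"

definition induced_edges :: "'a set set \<Rightarrow> 'a set \<Rightarrow> 'a set set" where
  "induced_edges E W = {e \<in> E. e \<subseteq> W}"

definition edge_nbhd :: "'a set set \<Rightarrow> 'a set \<Rightarrow> 'a set" where
  "edge_nbhd E S = \<Union>{e - S | e. e \<in> E \<and> e \<inter> S \<noteq> {}}"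

definition closed_nbhd :: "'a set set \<Rightarrow> 'a \<Rightarrow> 'a set" where
  "closed_nbhd E x = {x} \<union> {y. \<exists>e\<in>E. {x, y} \<subseteq> e}"

definition simplicial :: "nat \<Rightarrow> 'a set set \<Rightarrow> 'a \<Rightarrow> bool" where
  "simplicial d E x \<longleftrightarrow> (\<forall>U. U \<subseteq> closed_nbhd E x \<and> card U = d \<longrightarrow> U \<in> E)"

definition hg_type :: "'a set set \<Rightarrow> int \<times> int" where
  "hg_type F = (int (card F), int (card (\<Union>F)))"

definition induced_matching :: "'a set set \<Rightarrow> 'a set set \<Rightarrow> bool" where
  "induced_matching E F \<longleftrightarrow> F \<subseteq> E \<and> pairwise disjnt F
     \<and> (\<forall>e\<in>E. e \<subseteq> \<Union>F \<longrightarrow> e \<in> F)"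

definition self_disjoint :: "'a set set \<Rightarrow> 'a set set \<Rightarrow> bool" where
  "self_disjoint E F \<longleftrightarrow> F \<subseteq> E
     \<and> (\<forall>T\<in>F. \<not> T \<subseteq> \<Union>(F - {T}))
     \<and> (\<exists>F0\<subseteq>F. induced_matching E F0 \<and> (\<forall>T\<in>F - F0. \<exists>T'\<in>F0. card (T - T') = 1))"

end

theory Submission
  imports Defs
begin

theorem lemma3p4:
  fixes V :: "'a set" and E :: "'a set set" and d t :: nat and x :: 'a and S :: "'a set"
    and z :: "nat \<Rightarrow> 'a" and Sf :: "nat \<Rightarrow> 'a set" and S' :: "'a set set" and i j :: int
  assumes "d \<ge> 2"
    and "simple_hg V E" and "uniform_hg d E"
    and "\<forall>A\<in>E. \<forall>B\<in>E. A \<noteq> B \<and> A \<inter> B \<noteq> {} \<longrightarrow> card (A \<inter> B) = d - 1"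
    and "x \<in> V" and "simplicial d E x"
    and "S \<in> E" and "x \<in> S"
    and "inj_on z {1..t}" and "edge_nbhd E S = z ` {1..t}"
    and "inj_on Sf {1..t}"
    and "\<forall>l\<in>{1..t}. Sf l \<in> E \<and> Sf l - S = {z l} \<and> x \<notin> Sf l"
    and "self_disjoint (induced_edges E (V - (S \<union> edge_nbhd E S))) S'"
    and "hg_type S' = (i - 1 - int t, j - int d - int t)"
  shows "self_disjoint E (S' \<union> {S} \<union> Sf ` {1..t})
       \<and> hg_type (S' \<union> {S} \<union> Sf ` {1..t}) = (i, j)"
proof -
  define N where "N = edge_nbhd E S"
  define W where "W = V - (S \<union> N)"
  define A where "A = Sf ` {1..t}"
  have finV: "finite V" and EV: "\<And>e. e \<in> E \<Longrightarrow> e \<subseteq> V"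
    and Ecard: "\<And>e. e \<in> E \<Longrightarrow> card e \<ge> 2"
    and Esimp: "\<And>e e'. e \<in> E \<Longrightarrow> e' \<in> E \<Longrightarrow> e \<subseteq> e' \<Longrightarrow> e = e'"
    using assms(2) unfolding simple_hg_def by blast+
  have finE: "\<And>e. e \<in> E \<Longrightarrow> finite e" using finV EV finite_subset by blast
  have ne: "\<And>e. e \<in> E \<Longrightarrow> e \<noteq> {}" using Ecard by fastforce
  have Sd: "card S = d" using assms(3,7) unfolding uniform_hg_def by blast
  have "E \<subseteq> Pow V" using EV by blast
  then have finEE: "finite E" using finV by (simp add: finite_subset)
  have sdW: "self_disjoint (induced_edges E W) S'" using assms(13) unfolding W_def N_def .
  have S'E: "S' \<subseteq> E" and S'W: "\<And>T. T \<in> S' \<Longrightarrow> T \<subseteq> W"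
    using sdW unfolding self_disjoint_def induced_edges_def by blast+
  have finS': "finite S'" using S'E finEE finite_subset by blast
  have finUS': "finite (\<Union>S')" using finS' S'E finE by blast
  have Sfl: "\<And>l. l \<in> {1..t} \<Longrightarrow> Sf l \<in> E \<and> Sf l - S = {z l} \<and> x \<notin> Sf l" using assms(12) by blast
  have zN: "\<And>l. l \<in> {1..t} \<Longrightarrow> z l \<in> N" using assms(10) unfolding N_def by blast
  have zS: "\<And>l. l \<in> {1..t} \<Longrightarrow> z l \<notin> S \<and> z l \<in> Sf l" using Sfl by blast
  have Sfsub: "\<And>l. l \<in> {1..t} \<Longrightarrow> Sf l \<subseteq> S \<union> {z l}" using Sfl by blast
  have nbh: "\<And>e. e \<in> E \<Longrightarrow> e \<inter> S \<noteq> {} \<Longrightarrow> e - S \<subseteq> N"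
    unfolding N_def edge_nbhd_def by blast
  have UA: "\<Union>({S} \<union> A) = S \<union> z ` {1..t}"
    using zS Sfsub unfolding A_def by fastforce
  have WS: "W \<inter> (S \<union> z ` {1..t}) = {}" using zN unfolding W_def by blast
  have disjA: "S' \<inter> ({S} \<union> A) = {}"
  proof -
    { fix T assume "T \<in> S'" "T \<in> {S} \<union> A"
      then have "T \<subseteq> W" "T \<subseteq> S \<union> z ` {1..t}" using S'W UA by blast+
      then have "T = {}" using WS by blast
      then have False using \<open>T \<in> S'\<close> S'E ne by blast }
    then show ?thesis by blast
  qed
  have SnA: "S \<notin> A" using zS unfolding A_def by blast
  have cardA: "card A = t" unfolding A_def using assms(11) by (simp add: card_image)
  have finA: "finite A" unfolding A_def by simp
  have card1: "card (S' \<union> {S} \<union> A) = card S' + 1 + t"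
  proof -
    have "card (S' \<union> ({S} \<union> A)) = card S' + card ({S} \<union> A)"
      by (rule card_Un_disjoint) (use finS' finA disjA in auto)
    moreover have "card ({S} \<union> A) = 1 + t" using SnA finA cardA by simp
    ultimately show ?thesis by (simp add: Un_assoc)
  qed
  have card2: "card (\<Union>(S' \<union> {S} \<union> A)) = card (\<Union>S') + d + t"
  proof -
    have "\<Union>(S' \<union> {S} \<union> A) = \<Union>S' \<union> (S \<union> z ` {1..t})" using UA by auto
    moreover have "\<Union>S' \<inter> (S \<union> z ` {1..t}) = {}" using S'W WS by blast
    moreover have "card (S \<union> z ` {1..t}) = d + t"
    proof -
      have "S \<inter> z ` {1..t} = {}" using zS by blast
      then have "card (S \<union> z ` {1..t}) = card S + card (z ` {1..t})"
        using finE[OF assms(7)] by (simp add: card_Un_disjoint)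
      then show ?thesis using Sd assms(9) by (simp add: card_image)
    qed
    moreover have "finite (S \<union> z ` {1..t})" using finE[OF assms(7)] by simp
    ultimately show ?thesis using finUS' by (simp add: card_Un_disjoint)
  qed
  have typeq: "hg_type (S' \<union> {S} \<union> A) = (i, j)"
    using assms(14) card1 card2 unfolding hg_type_def by auto
  obtain F0 where F0: "F0 \<subseteq> S'" "induced_matching (induced_edges E W) F0"
      "\<forall>T\<in>S' - F0. \<exists>T'\<in>F0. card (T - T') = 1"
    using sdW unfolding self_disjoint_def by blast
  have irr: "\<forall>T\<in>S'. \<not> T \<subseteq> \<Union>(S' - {T})" using sdW unfolding self_disjoint_def by blast
  have im: "induced_matching E (F0 \<union> {S})"
    unfolding induced_matching_def
  proof (intro conjI)
    show "F0 \<union> {S} \<subseteq> E" using F0(1) S'E assms(7) by blast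
    have pw0: "pairwise disjnt F0" using F0(2) unfolding induced_matching_def by blast
    have "\<And>T. T \<in> F0 \<Longrightarrow> disjnt T S" using F0(1) S'W WS unfolding disjnt_def by blast
    then show "pairwise disjnt (F0 \<union> {S})" using pw0
      by (simp add: pairwise_insert disjnt_sym)
    show "\<forall>e\<in>E. e \<subseteq> \<Union>(F0 \<union> {S}) \<longrightarrow> e \<in> F0 \<union> {S}"
    proof (intro ballI impI)
      fix e assume eE: "e \<in> E" and sub: "e \<subseteq> \<Union>(F0 \<union> {S})"
      have UW: "\<Union>F0 \<subseteq> W" using F0(1) S'W by blast
      show "e \<in> F0 \<union> {S}"
      proof (cases "e \<inter> S = {}")
        case True
        then have "e \<subseteq> \<Union>F0" using sub by blast
        then have "e \<in> induced_edges E W" using UW eE unfolding induced_edges_def by blast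
        then have "e \<in> F0" using F0(2) \<open>e \<subseteq> \<Union>F0\<close> unfolding induced_matching_def by blast
        then show ?thesis by blast
      next
        case False
        then have "e - S \<subseteq> N" using nbh eE by blast
        moreover have "e - S \<subseteq> W" using sub UW by blast
        ultimately have "e \<subseteq> S" unfolding W_def by blast
        then have "e = S" using Esimp eE assms(7) by blast
        then show ?thesis by blast
      qed
    qed
  qed
  have sd: "self_disjoint E (S' \<union> {S} \<union> A)"
    unfolding self_disjoint_def
  proof (intro conjI)
    show "S' \<union> {S} \<union> A \<subseteq> E" using S'E assms(7) Sfl unfolding A_def by blast
    show "\<forall>T\<in>S' \<union> {S} \<union> A. \<not> T \<subseteq> \<Union>(S' \<union> {S} \<union> A - {T})"
    proof
      fix T assume T: "T \<in> S' \<union> {S} \<union> A"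
      show "\<not> T \<subseteq> \<Union>(S' \<union> {S} \<union> A - {T})"
      proof
        assume sub: "T \<subseteq> \<Union>(S' \<union> {S} \<union> A - {T})"
        consider "T \<in> S'" | "T = S" | l where "l \<in> {1..t}" "T = Sf l" using T unfolding A_def by blast
        then show False
        proof cases
          case 1
          have eq: "S' \<union> {S} \<union> A - {T} = (S' - {T}) \<union> ({S} \<union> A)" using 1 disjA by blast
          have "T \<subseteq> \<Union>(S' - {T}) \<union> (S \<union> z ` {1..t})" using sub UA unfolding eq by (simp only: Union_Un_distrib)
          moreover have "T \<inter> (S \<union> z ` {1..t}) = {}" using S'W[OF 1] WS by blast
          ultimately have "T \<subseteq> \<Union>(S' - {T})" by blast
          then show False using irr 1 by blast
        next
          case 2
          then have "x \<in> \<Union>(S' \<union> {S} \<union> A - {T})" using sub assms(8) by blast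
          then obtain U where U: "U \<in> S' \<union> A" "x \<in> U" using 2 by blast
          from U(1) show False
          proof
            assume "U \<in> S'" then show False using S'W U(2) assms(8) unfolding W_def by blast
          next
            assume "U \<in> A" then show False using U(2) Sfl unfolding A_def by blast
          qed
        next
          case 3
          then have "z l \<in> \<Union>(S' \<union> {S} \<union> A - {T})" using sub zS by blast
          then obtain U where U: "U \<in> S' \<union> {S} \<union> A" "U \<noteq> T" "z l \<in> U" by blast
          show False
          proof -
            consider "U \<in> S'" | "U = S" | m where "m \<in> {1..t}" "U = Sf m" using U(1) unfolding A_def by blast
            then show False
            proof cases
              case 1 then show False using S'W U(3) zN[OF 3(1)] unfolding W_def by blast
            next
              case 2 then show False using U(3) zS[OF 3(1)] by blast
            next
              case c: 3
              then have "l \<noteq> m" using U(2) 3 by blast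
              then have "z l \<noteq> z m" using assms(9) 3(1) c(1) unfolding inj_on_def by blast
              then show False using Sfsub[OF c(1)] U(3) c(2) zS[OF 3(1)] by blast
            qed
          qed
        qed
      qed
    qed
    show "\<exists>F0'\<subseteq>S' \<union> {S} \<union> A. induced_matching E F0' \<and> (\<forall>T\<in>S' \<union> {S} \<union> A - F0'. \<exists>T'\<in>F0'. card (T - T') = 1)"
    proof (intro exI conjI)
      show "F0 \<union> {S} \<subseteq> S' \<union> {S} \<union> A" using F0(1) by blast
      show "induced_matching E (F0 \<union> {S})" by (rule im)
      show "\<forall>T\<in>S' \<union> {S} \<union> A - (F0 \<union> {S}). \<exists>T'\<in>F0 \<union> {S}. card (T - T') = 1"
      proof
        fix T assume T: "T \<in> S' \<union> {S} \<union> A - (F0 \<union> {S})"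
        show "\<exists>T'\<in>F0 \<union> {S}. card (T - T') = 1"
        proof (cases "T \<in> S'")
          case True then show ?thesis using F0(3) T by blast
        next
          case False
          then obtain l where "l \<in> {1..t}" "T = Sf l" using T unfolding A_def by blast
          then have "card (T - S) = 1" using Sfl by simp
          then show ?thesis by blast
        qed
      qed
    qed
  qed
  show ?thesis using sd typeq unfolding A_def by blast
qed

end
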